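(* Let $p$ be a prime, let $H$ be any finite Abelian $p$-group (possibly trivial), and let $G\cong C_p\oplus H$. Let $S$ be a normal sequence over $G$ with $|S|=\mathsf{D}(G)+i-1$, where $i\in\{1,2,\dots,p-1\}$. Then $S=0^iT$, where $T$ is a zero-sumfree sequence over $G$.
   Context: $C_p$ denotes the cyclic group of order $p$. A sequence over a finite Abelian group $G$ (written additively) is a finite multiset of elements of $G$; its length $|S|$ is the number of terms counted with multiplicity, and a subsequence is a sub-multiset. $S$ is a zero-sum sequence if the sum of its terms is $0$; $S$ is zero-sumfree if no non-empty subsequence has sum $0$. The Davenport constant $\mathsf{D}(G)$ is the smallest positive integer $t$ such that every sequence over $G$ of length at least $t$ contains a non-empty zero-sum subsequence. A sequence $S$ over $G$ with $|S|\ge\mathsf{D}(G)$ is normal if every zero-sum subsequence $S'$ of $S$ satisfies $|S'|\le|S|-\mathsf{D}(G)+1$. The notation $0^iT$ denotes the sequence obtained from $T$ by adjoining $i$ copies of $0$. *)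

theory Defs
  imports Main "HOL-Library.Multiset" "HOL-Library.Product_Plus" "HOL-Library.Cardinality" "HOL-Computational_Algebra.Primes"
begin

text \<open>Sequences over an additive abelian group are multisets of group elements.\<close>

definition zero_sum_seq :: "'g::comm_monoid_add multiset \<Rightarrow> bool" where
  "zero_sum_seq S \<longleftrightarrow> sum_mset S = 0"

definition zero_sumfree :: "'g::comm_monoid_add multiset \<Rightarrow> bool" where
  "zero_sumfree S \<longleftrightarrow> (\<forall>S'. S' \<subseteq># S \<and> S' \<noteq> {#} \<longrightarrow> sum_mset S' \<noteq> 0)"

definition davenport :: "'g::{ab_group_add,finite} itself \<Rightarrow> nat" where
  "davenport _ = (LEAST t::nat. 0 < t \<and>
      (\<forall>S::'g multiset. t \<le> size S \<longrightarrow> (\<exists>S'. S' \<subseteq># S \<and> S' \<noteq> {#} \<and> sum_mset S' = 0)))"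

definition normal_seq :: "'g::{ab_group_add,finite} multiset \<Rightarrow> bool" where
  "normal_seq S \<longleftrightarrow> davenport TYPE('g) \<le> size S \<and>
     (\<forall>S'. S' \<subseteq># S \<and> zero_sum_seq S' \<longrightarrow> size S' \<le> size S - davenport TYPE('g) + 1)"

definition nsmul :: "nat \<Rightarrow> 'g::comm_monoid_add \<Rightarrow> 'g" where
  "nsmul n g = (\<Sum>_<n. g)"

definition cyclic_group_type :: "'g::{ab_group_add,finite} itself \<Rightarrow> bool" where
  "cyclic_group_type _ \<longleftrightarrow> (\<exists>g::'g. \<forall>x. \<exists>n. x = nsmul n g)"

definition group_iso :: "('a::ab_group_add \<Rightarrow> 'b::ab_group_add) \<Rightarrow> bool" where
  "group_iso f \<longleftrightarrow> bij f \<and> (\<forall>x y. f (x + y) = f x + f y)"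

end

theory Submission
  imports Defs "HOL-Library.Poly_Mapping" "HOL-Number_Theory.Cong"
begin

lemma nsmul_0[simp]: "nsmul 0 g = 0" by (simp add: nsmul_def)
lemma nsmul_Suc: "nsmul (Suc n) g = g + nsmul n g" by (simp add: nsmul_def add.commute)
lemma nsmul_1[simp]: "nsmul 1 g = g" by (simp add: nsmul_def)
lemma nsmul_Suc0[simp]: "nsmul (Suc 0) g = g" by (simp add: nsmul_def)
lemma nsmul_add: "nsmul (m + n) g = nsmul m g + nsmul n g"
  by (induct m) (simp_all add: nsmul_Suc add.assoc)
lemma nsmul_zero[simp]: "nsmul n (0::'a::comm_monoid_add) = 0" by (simp add: nsmul_def)
lemma nsmul_plus: "nsmul n (a + b) = nsmul n a + nsmul n (b::'a::comm_monoid_add)"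
  by (induct n) (simp_all add: nsmul_Suc algebra_simps)
lemma nsmul_mult: "nsmul (m * n) g = nsmul m (nsmul n g)"
  by (induct m) (simp_all add: nsmul_Suc nsmul_add nsmul_plus)
lemma nsmul_uminus: "nsmul n (- g) = - nsmul n (g::'a::ab_group_add)"
  by (induct n) (simp_all add: nsmul_Suc)
lemma sum_const_nsmul: "finite A \<Longrightarrow> sum (\<lambda>_. g) A = nsmul (card A) g"
  by (induct A rule: finite_induct) (simp_all add: nsmul_Suc)

section \<open>group ring\<close>

abbreviation XX :: "'g::comm_monoid_add \<Rightarrow> ('g \<Rightarrow>\<^sub>0 int)" where
  "XX g \<equiv> Poly_Mapping.single g 1"

lemma XX_add: "XX (a + b) = XX a * XX b"
  by (simp add: mult_single)
lemma XX_0: "XX 0 = 1" by simp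
lemma XX_nsmul: "XX (nsmul n g) = XX g ^ n"
  by (induct n) (simp_all add: nsmul_Suc XX_add)
lemma XX_sum: "finite I \<Longrightarrow> (\<Prod>j\<in>I. XX (t j)) = XX (sum t I)"
  by (induct I rule: finite_induct) (simp_all add: XX_add)

lemma lookup_sum: "finite A \<Longrightarrow> Poly_Mapping.lookup (sum f A) k = (\<Sum>a\<in>A. Poly_Mapping.lookup (f a) k)"
  by (induct A rule: finite_induct) (simp_all add: lookup_add)

lemma lookup_pmul:
  assumes "(of_nat p :: 'g::comm_monoid_add \<Rightarrow>\<^sub>0 int) dvd F"
  shows "int p dvd Poly_Mapping.lookup F k"
proof -
  obtain w where "F = of_nat p * w" using assms by blast
  then have "F = Poly_Mapping.map ((*) (int p)) w"
    by (simp add: mult_map_scale_conv_mult flip: single_of_nat)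
  then show ?thesis by (simp add: map.rep_eq when_def)
qed

lemma frob:
  fixes a b :: "'r::comm_ring_1"
  assumes p: "prime p"
  shows "of_nat p dvd ((a + b) ^ p - a ^ p - b ^ p)"
proof -
  have p0: "p > 0" using p prime_gt_0_nat by blast
  have "(a + b) ^ p = (\<Sum>k\<le>p. of_nat (p choose k) * a ^ k * b ^ (p - k))"
    by (rule binomial_ring)
  also have "{..p} = insert p (insert 0 {1..<p})" using p0 by auto
  also have "(\<Sum>k\<in>insert p (insert 0 {1..<p}). of_nat (p choose k) * a ^ k * b ^ (p - k))
     = a ^ p + (b ^ p + (\<Sum>k\<in>{1..<p}. of_nat (p choose k) * a ^ k * b ^ (p - k)))"
    using p0 by (subst sum.insert; auto)+
  finally have eq: "(a + b) ^ p - a ^ p - b ^ p = (\<Sum>k\<in>{1..<p}. of_nat (p choose k) * a ^ k * b ^ (p - k))"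
    by simp
  have "of_nat p dvd (\<Sum>k\<in>{1..<p}. of_nat (p choose k) * a ^ k * b ^ (p - k) :: 'r)"
  proof (rule dvd_sum)
    fix k assume "k \<in> {1..<p}"
    then have "p dvd (p choose k)" using dvd_choose_prime[of k p] p p0 by auto
    then obtain m where "p choose k = p * m" by blast
    then have "(of_nat p :: 'r) dvd of_nat (p choose k)" by simp
    then show "(of_nat p :: 'r) dvd of_nat (p choose k) * a ^ k * b ^ (p - k)"
      by (simp add: mult.assoc)
  qed
  then show ?thesis using eq by simp
qed

lemma pow_cong:
  fixes a b :: "'r::comm_ring_1"
  assumes "c dvd (a - b)"
  shows "c dvd (a ^ n - b ^ n)"
  using assms by (simp add: power_diff_sumr2)

lemma frob_X:
  fixes e :: "'g::ab_group_add"
  assumes p: "prime p"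
  shows "(of_nat p :: 'g \<Rightarrow>\<^sub>0 int) dvd ((1 - XX e) ^ (p ^ m) - (1 - XX (nsmul (p ^ m) e)))"
proof (induct m)
  case 0
  then show ?case by simp
next
  case (Suc m)
  define h where "h = nsmul (p ^ m) e"
  define A where "A = (1 - XX e :: 'g \<Rightarrow>\<^sub>0 int) ^ (p ^ m)"
  define B where "B = (1 - XX h :: 'g \<Rightarrow>\<^sub>0 int)"
  have 1: "(of_nat p :: 'g \<Rightarrow>\<^sub>0 int) dvd (A ^ p - B ^ p)"
    using Suc unfolding A_def B_def h_def by (rule pow_cong)
  have 2: "(of_nat p :: 'g \<Rightarrow>\<^sub>0 int) dvd ((B + XX h) ^ p - B ^ p - XX h ^ p)"
    by (rule frob[OF p])
  have "B + XX h = 1" unfolding B_def by simp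
  then have h2: "(of_nat p :: 'g \<Rightarrow>\<^sub>0 int) dvd (1 - B ^ p - XX h ^ p)"
    using 2 by simp
  have "B ^ p - (1 - XX h ^ p) = - (1 - B ^ p - XX h ^ p)" by (simp add: algebra_simps)
  then have 3: "(of_nat p :: 'g \<Rightarrow>\<^sub>0 int) dvd (B ^ p - (1 - XX (nsmul p h)))"
    using h2 unfolding XX_nsmul by (metis dvd_minus_iff)
  have "nsmul (p ^ Suc m) e = nsmul p h"
    by (simp add: h_def nsmul_mult)
  moreover have "(1 - XX e) ^ (p ^ Suc m) = A ^ p"
    by (simp add: A_def flip: power_mult) (simp add: mult.commute)
  moreover have "A ^ p - B ^ p + (B ^ p - (1 - XX (nsmul p h))) = A ^ p - (1 - XX (nsmul p h))"
    by simp
  ultimately show ?case using dvd_add[OF 1 3] by metis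
qed

fun inI :: "('r::comm_ring_1 \<times> nat) list \<Rightarrow> 'r \<Rightarrow> bool" where
  "inI [] z \<longleftrightarrow> z = 0"
| "inI (yd # gs) z \<longleftrightarrow> (\<exists>w z'. z = w * fst yd + z' \<and> inI gs z')"

fun Bd :: "('r \<times> nat) list \<Rightarrow> nat" where
  "Bd [] = 0"
| "Bd (yd # gs) = snd yd - 1 + Bd gs"

lemma inI_0: "inI gs 0"
  by (induct gs) (auto intro!: exI[of _ 0])

lemma inI_add: "inI gs a \<Longrightarrow> inI gs b \<Longrightarrow> inI gs (a + b)"
proof (induct gs arbitrary: a b)
  case Nil then show ?case by simp
next
  case (Cons yd gs)
  from Cons.prems obtain w1 a' w2 b' where "a = w1 * fst yd + a'" "inI gs a'"
    "b = w2 * fst yd + b'" "inI gs b'" by auto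
  then have "a + b = (w1 + w2) * fst yd + (a' + b') \<and> inI gs (a' + b')"
    using Cons.hyps[of a' b'] by (simp add: algebra_simps)
  then show ?case by (simp only: inI.simps) blast
qed

lemma inI_mult: "inI gs a \<Longrightarrow> inI gs (c * a)"
proof (induct gs arbitrary: a)
  case Nil then show ?case by simp
next
  case (Cons yd gs)
  from Cons.prems obtain w a' where "a = w * fst yd + a'" "inI gs a'" by auto
  then have "c * a = (c * w) * fst yd + (c * a') \<and> inI gs (c * a')"
    using Cons.hyps[of a'] by (simp add: algebra_simps)
  then show ?case by (simp only: inI.simps) blast
qed

lemma inI_gen: "yd \<in> set gs \<Longrightarrow> inI gs (fst yd)"
proof (induct gs)
  case Nil then show ?case by simp
next
  case (Cons yd' gs)
  show ?case
  proof (cases "yd = yd'")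
    case True
    then have "fst yd = 1 * fst yd' + 0 \<and> inI gs 0" by (simp add: inI_0)
    then show ?thesis by (simp only: inI.simps) blast
  next
    case False
    then have "fst yd = 0 * fst yd' + fst yd \<and> inI gs (fst yd)" using Cons by simp
    then show ?thesis by (simp only: inI.simps) blast
  qed
qed

lemma prod_inI:
  fixes z :: "'j \<Rightarrow> 'r::comm_ring_1"
  assumes "\<forall>yd\<in>set gs. c dvd (fst yd ^ snd yd)" "finite J" "\<forall>j\<in>J. inI gs (z j)"
    "card J > Bd gs"
  shows "c dvd (\<Prod>j\<in>J. z j)"
  using assms
proof (induct gs arbitrary: J z)
  case Nil
  then obtain j where "j \<in> J" by fastforce
  then have "(\<Prod>j\<in>J. z j) = 0" using Nil by (intro prod_zero) auto
  then show ?case by simp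
next
  case (Cons yd gs)
  obtain y d where yd: "yd = (y, d)" by fastforce
  have "\<forall>j\<in>J. \<exists>w z'. z j = w * y + z' \<and> inI gs z'" using Cons.prems(3) yd by auto
  then obtain w z' where wz: "\<And>j. j \<in> J \<Longrightarrow> z j = w j * y + z' j \<and> inI gs (z' j)"
    by metis
  have cy: "c dvd y ^ d" using Cons.prems(1) yd by auto
  have "(\<Prod>j\<in>J. z j) = (\<Prod>j\<in>J. w j * y + z' j)" using wz by (intro prod.cong) auto
  also have "\<dots> = (\<Sum>A\<in>Pow J. (\<Prod>j\<in>A. w j * y) * (\<Prod>j\<in>J - A. z' j))"
    by (rule prod_add[OF Cons.prems(2)])
  finally have eq: "(\<Prod>j\<in>J. z j) = (\<Sum>A\<in>Pow J. (\<Prod>j\<in>A. w j * y) * (\<Prod>j\<in>J - A. z' j))" .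
  have "c dvd (\<Sum>A\<in>Pow J. (\<Prod>j\<in>A. w j * y) * (\<Prod>j\<in>J - A. z' j))"
  proof (rule dvd_sum)
    fix A assume A: "A \<in> Pow J"
    then have finA: "finite A" using Cons.prems(2) finite_subset by auto
    show "c dvd (\<Prod>j\<in>A. w j * y) * (\<Prod>j\<in>J - A. z' j)"
    proof (cases "card A \<ge> d")
      case True
      have "(\<Prod>j\<in>A. w j * y) = (\<Prod>j\<in>A. w j) * y ^ card A"
        by (simp add: prod.distrib)
      also have "y ^ card A = y ^ d * y ^ (card A - d)" using True
        by (simp flip: power_add)
      finally show ?thesis using cy by simp
    next
      case False
      have "card (J - A) = card J - card A" using A Cons.prems(2)
        by (simp add: card_Diff_subset finite_subset)
      moreover have "card J > d - 1 + Bd gs" using Cons.prems(4) yd by simp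
      ultimately have "card (J - A) > Bd gs" using False by linarith
      then have "c dvd (\<Prod>j\<in>J - A. z' j)"
        using Cons.hyps[of "J - A" z'] Cons.prems wz by auto
      then show ?thesis by simp
    qed
  qed
  then show ?case using eq by simp
qed

fun spanL :: "'g::comm_monoid_add list \<Rightarrow> 'g set" where
  "spanL [] = {0}"
| "spanL (e # es) = {nsmul c e + y | c y. y \<in> spanL es}"

definition gens :: "nat \<Rightarrow> ('g::comm_monoid_add \<times> nat) list \<Rightarrow> (('g \<Rightarrow>\<^sub>0 int) \<times> nat) list" where
  "gens p es = map (\<lambda>ea. (1 - XX (fst ea), p ^ snd ea)) es"

fun Zm :: "nat \<Rightarrow> ('g \<times> nat) list \<Rightarrow> 'g multiset" where
  "Zm p [] = {#}"
| "Zm p (ea # es) = replicate_mset (p ^ snd ea - 1) (fst ea) + Zm p es"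

lemma Bd_gens: "Bd (gens p es) = size (Zm p es)"
  by (induct es) (simp_all add: gens_def)

lemma inI_cons: "inI gs z \<Longrightarrow> inI (g # gs) z"
proof -
  assume "inI gs z"
  then have "z = 0 * fst g + z \<and> inI gs z" by simp
  then show ?thesis by (simp only: inI.simps) blast
qed

lemma one_minus_XX_add: "1 - XX (a + b) = (1 - XX a) + XX a * (1 - XX b)"
  by (simp add: XX_add algebra_simps)

lemma inI_nsmul:
  assumes "inI gs (1 - XX e)"
  shows "inI gs (1 - XX (nsmul c e))"
proof (induct c)
  case 0 then show ?case by (simp add: inI_0)
next
  case (Suc c)
  show ?case unfolding nsmul_Suc one_minus_XX_add
    by (intro inI_add inI_mult assms Suc)
qed

lemma span_inI:
  "x \<in> spanL (map fst es) \<Longrightarrow> inI (gens p es) (1 - XX x)"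
proof (induct es arbitrary: x)
  case Nil then show ?case by (simp add: inI_0)
next
  case (Cons ea es)
  from Cons.prems obtain c y where x: "x = nsmul c (fst ea) + y" and y: "y \<in> spanL (map fst es)"
    by auto
  have g: "inI (gens p (ea # es)) (1 - XX (fst ea))"
    using inI_gen[of "(1 - XX (fst ea), p ^ snd ea)" "gens p (ea # es)"] by (simp add: gens_def)
  have "inI (gens p (ea # es)) (1 - XX y)"
    using inI_cons[OF Cons.hyps[OF y], of "(1 - XX (fst ea), p ^ snd ea)"] by (simp add: gens_def)
  then show ?case unfolding x one_minus_XX_add
    by (intro inI_add inI_mult inI_nsmul g)
qed

lemma gens_pow:
  assumes "prime p" "\<forall>ea\<in>set es. nsmul (p ^ snd ea) (fst ea) = 0"
  shows "\<forall>yd\<in>set (gens p es). (of_nat p :: 'g::ab_group_add \<Rightarrow>\<^sub>0 int) dvd (fst yd ^ snd yd)"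
proof
  fix yd assume "yd \<in> set (gens p es)"
  then obtain ea where ea: "ea \<in> set es" "yd = (1 - XX (fst ea), p ^ snd ea)"
    by (auto simp: gens_def)
  show "(of_nat p :: 'g \<Rightarrow>\<^sub>0 int) dvd (fst yd ^ snd yd)"
    using frob_X[OF assms(1), of "fst ea" "snd ea"] assms(2) ea by simp
qed

lemma neg_one_pow_XX: "((-1) ^ n :: 'g::comm_monoid_add \<Rightarrow>\<^sub>0 int) * XX s = Poly_Mapping.single s ((-1) ^ n)"
proof -
  have "((-1) ^ n :: 'g \<Rightarrow>\<^sub>0 int) = of_int ((-1) ^ n)" by simp
  also have "\<dots> = Poly_Mapping.single 0 ((-1) ^ n)" by (simp flip: single_of_int)
  finally show ?thesis by (simp add: mult_single)
qed

lemma prod_expand: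
  fixes t :: "'j \<Rightarrow> 'g::comm_monoid_add"
  assumes "finite J"
  shows "(\<Prod>j\<in>J. 1 - XX (t j)) = (\<Sum>I\<in>Pow J. Poly_Mapping.single (sum t I) ((-1) ^ card I))"
proof -
  have "(\<Prod>j\<in>J. 1 - XX (t j)) = (\<Prod>j\<in>J. (- XX (t j)) + 1)" by simp
  also have "\<dots> = (\<Sum>I\<in>Pow J. (\<Prod>j\<in>I. - XX (t j)) * (\<Prod>j\<in>J - I. 1))"
    by (rule prod_add[OF assms])
  also have "\<dots> = (\<Sum>I\<in>Pow J. Poly_Mapping.single (sum t I) ((-1) ^ card I))"
  proof (rule sum.cong)
    fix I assume "I \<in> Pow J"
    then have fI: "finite I" using assms finite_subset by auto
    have "(\<Prod>j\<in>I. - XX (t j)) = (\<Prod>j\<in>I. (-1) * XX (t j))" by simp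
    also have "\<dots> = (-1) ^ card I * XX (sum t I)"
      by (simp only: prod.distrib prod_constant XX_sum[OF fI])
    finally show "(\<Prod>j\<in>I. - XX (t j)) * (\<Prod>j\<in>J - I. 1) = Poly_Mapping.single (sum t I) ((-1) ^ card I)"
      by (simp add: neg_one_pow_XX)
  qed simp
  finally show ?thesis .
qed

lemma lookup_expand:
  fixes t :: "'j \<Rightarrow> 'g::comm_monoid_add"
  assumes "finite J"
  shows "Poly_Mapping.lookup (XX s * (\<Prod>j\<in>J. 1 - XX (t j))) x
     = (\<Sum>I\<in>Pow J. ((-1) ^ card I when s + sum t I = x))"
proof -
  have "XX s * (\<Prod>j\<in>J. 1 - XX (t j)) = (\<Sum>I\<in>Pow J. Poly_Mapping.single (s + sum t I) ((-1) ^ card I))"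
    by (simp add: prod_expand[OF assms] sum_distrib_left mult_single)
  then show ?thesis using assms by (simp add: lookup_sum lookup_single)
qed

theorem olson_count:
  fixes t :: "'j \<Rightarrow> 'g::ab_group_add"
  assumes p: "prime p" and es: "\<forall>ea\<in>set es. nsmul (p ^ snd ea) (fst ea) = 0"
    and J: "finite J" "\<forall>j\<in>J. t j \<in> spanL (map fst es)" "card J > size (Zm p es)"
  shows "int p dvd (\<Sum>I\<in>Pow J. ((-1) ^ card I when s + sum t I = 0))"
proof -
  have "(of_nat p :: 'g \<Rightarrow>\<^sub>0 int) dvd (\<Prod>j\<in>J. 1 - XX (t j))"
  proof (rule prod_inI[OF gens_pow[OF p es] J(1)])
    show "\<forall>j\<in>J. inI (gens p es) (1 - XX (t j))" using J span_inI by blast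
    show "Bd (gens p es) < card J" using J Bd_gens by metis
  qed
  then have "(of_nat p :: 'g \<Rightarrow>\<^sub>0 int) dvd XX s * (\<Prod>j\<in>J. 1 - XX (t j))"
    by simp
  from lookup_pmul[OF this, of 0] show ?thesis by (simp add: lookup_expand[OF J(1)])
qed

definition sg :: "'g::ab_group_add set \<Rightarrow> bool" where
  "sg A \<longleftrightarrow> 0 \<in> A \<and> (\<forall>x\<in>A. \<forall>y\<in>A. x + y \<in> A) \<and> (\<forall>x\<in>A. - x \<in> A)"

lemma sg_0: "sg A \<Longrightarrow> 0 \<in> A" by (simp add: sg_def)
lemma sg_add: "sg A \<Longrightarrow> x \<in> A \<Longrightarrow> y \<in> A \<Longrightarrow> x + y \<in> A" by (simp add: sg_def)
lemma sg_neg: "sg A \<Longrightarrow> x \<in> A \<Longrightarrow> - x \<in> A" by (simp add: sg_def)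
lemma sg_diff: "sg A \<Longrightarrow> x \<in> A \<Longrightarrow> y \<in> A \<Longrightarrow> x - y \<in> A"
  using sg_add[of A x "- y"] sg_neg[of A y] by simp
lemma sg_nsmul: "sg A \<Longrightarrow> x \<in> A \<Longrightarrow> nsmul n x \<in> A"
  by (induct n) (simp_all add: nsmul_Suc sg_0 sg_add)
lemma sg_sum_mset: "sg A \<Longrightarrow> set_mset M \<subseteq> A \<Longrightarrow> sum_mset M \<in> A"
  by (induct M) (simp_all add: sg_0 sg_add)

lemma sum_mset_replicate: "sum_mset (replicate_mset c g) = nsmul c g"
  by (induct c) (simp_all add: nsmul_Suc)

lemma kill_mod: "nsmul m x = 0 \<Longrightarrow> nsmul n x = nsmul (n mod m) x"
proof -
  assume m: "nsmul m x = 0"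
  have "nsmul n x = nsmul ((n div m) * m + n mod m) x" by simp
  also have "\<dots> = nsmul (n mod m) x" by (simp only: nsmul_add nsmul_mult m) simp
  finally show ?thesis .
qed

lemma coprime_kill:
  fixes h :: "'g::comm_monoid_add"
  assumes "coprime u m" "nsmul m h = 0" "nsmul u h = 0"
  shows "h = 0"
proof -
  obtain s where s: "[u * s = 1] (mod m)" using cong_solve_coprime_nat[OF assms(1)] by (auto simp: One_nat_def)
  have "h = nsmul (1 mod m) h" using kill_mod[OF assms(2), of 1] by simp
  also have "\<dots> = nsmul ((u * s) mod m) h" using s by (simp add: cong_def)
  also have "\<dots> = nsmul (s * u) h" using kill_mod[OF assms(2), of "u * s"] by (simp add: mult.commute)
  also have "\<dots> = 0" by (simp add: nsmul_mult assms(3))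
  finally show ?thesis .
qed

lemma order_pow:
  fixes g :: "'g::comm_monoid_add"
  assumes p: "prime p" and k: "nsmul (p ^ a) g = 0" and nz: "nsmul (p ^ (a - 1)) g \<noteq> 0"
    and c: "nsmul c g = 0"
  shows "p ^ a dvd c"
proof (rule ccontr)
  assume nd: "\<not> p ^ a dvd c"
  define r where "r = c mod p ^ a"
  have r0: "r \<noteq> 0" using nd by (simp add: r_def mod_eq_0_iff_dvd)
  have pa: "p ^ a > 0" using p prime_gt_0_nat by simp
  have rl: "r < p ^ a" using pa by (simp add: r_def)
  have nr: "nsmul r g = 0" using kill_mod[OF k, of c] c by (simp add: r_def)
  obtain x y where xy: "r * x = p ^ a * y + gcd r (p ^ a)" using bezout_nat[OF r0] by blast
  define d where "d = gcd r (p ^ a)"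
  have "nsmul (r * x) g = nsmul (p ^ a * y + d) g" using xy by (simp add: d_def)
  then have nd0: "nsmul d g = 0"
    by (simp add: nsmul_add nsmul_mult nr k mult.commute[of _ x] mult.commute[of "p^a" y])
  have "d dvd p ^ a" by (simp add: d_def)
  then obtain b where b: "b \<le> a" "d = p ^ b" using divides_primepow_nat[OF p] by blast
  have "d \<le> r" using r0 by (simp add: d_def gcd_le1_nat)
  then have "p ^ b < p ^ a" using rl b by simp
  then have "b < a" using p prime_gt_1_nat power_less_imp_less_exp by blast
  then have "p ^ (a - 1) = p ^ (a - 1 - b) * p ^ b" by (simp flip: power_add)
  then have "nsmul (p ^ (a - 1)) g = 0" using nd0 b by (simp add: nsmul_mult)
  then show False using nz by simp
qed

lemma coprime_absorb:
  fixes y :: "'g::ab_group_add"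
  assumes K: "sg K" and k2: "k2 \<in> K" and ykill: "nsmul (p ^ a) y = 0"
    and cop: "coprime r (p ^ a)" and eq: "nsmul c g = k2 + nsmul r y"
  shows "\<exists>c' k'. k' \<in> K \<and> y = nsmul c' g + k'"
proof -
  obtain s where s: "[r * s = 1] (mod p ^ a)"
    using cong_solve_coprime_nat[OF cop] by (auto simp: One_nat_def)
  have "nsmul (s * r) y = nsmul ((r * s) mod p ^ a) y"
    using kill_mod[OF ykill, of "s * r"] by (simp add: mult.commute)
  also have "\<dots> = nsmul (1 mod p ^ a) y" using s by (simp add: cong_def)
  also have "\<dots> = y" using kill_mod[OF ykill, of 1] by simp
  finally have sy: "nsmul (s * r) y = y" .
  have "nsmul (s * c) g = nsmul s k2 + nsmul (s * r) y"
    by (simp only: nsmul_mult eq nsmul_plus)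
  then have "nsmul (s * c) g = nsmul s k2 + y" by (simp only: sy)
  then have yeq: "y = nsmul (s * c) g + - nsmul s k2"
    by (simp add: algebra_simps)
  have "- nsmul s k2 \<in> K" using K k2 by (simp add: sg_neg sg_nsmul)
  then show ?thesis using yeq by blast
qed

lemma CK_add_lem:
  fixes g :: "'g::ab_group_add"
  assumes K: "sg K" and CK_def: "CK = {nsmul c g + k | c k. k \<in> K}"
  shows "u \<in> CK \<Longrightarrow> v \<in> CK \<Longrightarrow> u + v \<in> CK"
proof -
    assume "u \<in> CK" "v \<in> CK"
    then obtain c1 k1 c2 k2 where "u = nsmul c1 g + k1" "k1 \<in> K" "v = nsmul c2 g + k2" "k2 \<in> K"
      unfolding CK_def by blast
    then have "u + v = nsmul (c1 + c2) g + (k1 + k2) \<and> k1 + k2 \<in> K"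
      using K(1) by (simp add: nsmul_add sg_add algebra_simps)
    then show ?thesis unfolding CK_def by blast
qed

lemma complement:
  fixes A :: "'g::{ab_group_add,finite} set"
  assumes p: "prime p" and A: "sg A" and gA: "g \<in> A"
    and kill: "\<forall>x\<in>A. nsmul (p ^ a) x = 0" and a1: "a \<ge> 1"
    and nz: "nsmul (p ^ (a - 1)) g \<noteq> 0"
  shows "\<exists>K. sg K \<and> K \<subseteq> A \<and> (\<forall>c. nsmul c g \<in> K \<longrightarrow> nsmul c g = 0)
            \<and> (\<forall>x\<in>A. \<exists>c k. k \<in> K \<and> x = nsmul c g + k)"
proof -
  define P where "P K \<longleftrightarrow> sg K \<and> K \<subseteq> A \<and> (\<forall>c. nsmul c g \<in> K \<longrightarrow> nsmul c g = 0)" for K :: "'g set"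
  have P0: "P {0}" using A by (auto simp: P_def sg_def sg_0)
  have bnd: "\<forall>K. P K \<longrightarrow> card K < CARD('g) + 1" by (simp add: card_mono le_imp_less_Suc)
  obtain K where PK: "P K" and Kmax: "\<And>K'. P K' \<Longrightarrow> card K' \<le> card K"
    using ex_has_greatest_nat[of P "{0}" card "CARD('g) + 1", OF P0 bnd] by blast
  have K: "sg K" "K \<subseteq> A" "\<And>c. nsmul c g \<in> K \<Longrightarrow> nsmul c g = 0" using PK by (auto simp: P_def)
  have pa: "p ^ a = p * p ^ (a - 1)" using a1 by (simp flip: power_Suc)
  have gk: "nsmul (p ^ a) g = 0" using kill gA by blast
  define CK where "CK = {nsmul c g + k | c k. k \<in> K}"
  have CK_add: "u \<in> CK \<Longrightarrow> v \<in> CK \<Longrightarrow> u + v \<in> CK" for u v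
    using CK_add_lem[OF K(1) CK_def] .
  have CK_K: "k \<in> K \<Longrightarrow> nsmul c g + k \<in> CK" for c k
    using CK_def by blast
  have "\<forall>x\<in>A. x \<in> CK"
  proof (rule ccontr)
    assume "\<not> (\<forall>x\<in>A. x \<in> CK)"
    then obtain x0 where x0: "x0 \<in> A" "x0 \<notin> CK" by blast
    define j where "j = (LEAST j. nsmul (p ^ j) x0 \<in> CK)"
    have ex: "nsmul (p ^ a) x0 \<in> CK" using kill x0 CK_K[of 0 0] K(1) sg_0 by fastforce
    have jC: "nsmul (p ^ j) x0 \<in> CK" unfolding j_def using ex by (rule LeastI)
    have j0: "j \<noteq> 0"
    proof
      assume "j = 0"
      then have "nsmul (p ^ j) x0 = x0" by simp
      then show False using jC x0(2) by simp
    qed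
    have xn: "nsmul (p ^ (j - 1)) x0 \<notin> CK"
      using not_less_Least[of "j - 1" "\<lambda>j. nsmul (p ^ j) x0 \<in> CK"] j0 unfolding j_def by fastforce
    define x where "x = nsmul (p ^ (j - 1)) x0"
    have xA: "x \<in> A" using sg_nsmul[OF A x0(1)] by (simp add: x_def)
    have pj: "p ^ j = p * p ^ (j - 1)" using j0 by (simp flip: power_Suc)
    have "nsmul p x \<in> CK" using jC by (simp add: x_def pj nsmul_mult)
    then obtain m k where mk: "nsmul p x = nsmul m g + k" "k \<in> K" by (auto simp: CK_def)
    have ppa: "p ^ (a - 1) * p = p ^ a" using pa by (simp add: mult.commute)
    have "nsmul (p ^ (a - 1)) (nsmul p x) = nsmul (p ^ a) x"
      by (metis nsmul_mult ppa)
    also have "\<dots> = 0" using kill xA by blast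
    finally have "nsmul (p ^ (a - 1)) (nsmul p x) = 0" .
    then have "nsmul (p ^ (a - 1) * m) g + nsmul (p ^ (a - 1)) k = 0"
      by (simp add: mk nsmul_plus nsmul_mult)
    then have "nsmul (p ^ (a - 1) * m) g = - nsmul (p ^ (a - 1)) k"
      by (simp add: eq_neg_iff_add_eq_0)
    also have "\<dots> \<in> K" using K(1) mk(2) by (simp add: sg_neg sg_nsmul)
    finally have "nsmul (p ^ (a - 1) * m) g = 0" using K(3) by blast
    then have "p ^ a dvd p ^ (a - 1) * m" using order_pow[OF p gk nz] by blast
    then have "p ^ (a - 1) * p dvd p ^ (a - 1) * m" using ppa by simp
    moreover have "p ^ (a - 1) \<noteq> 0" using p prime_gt_0_nat by simp
    ultimately have "p dvd m" using dvd_times_left_cancel_iff by blast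
    then obtain m' where m': "m = p * m'" by blast
    define y where "y = x - nsmul m' g"
    have yA: "y \<in> A" using A xA gA by (simp add: y_def sg_diff sg_nsmul)
    have "nsmul p y = nsmul p x + - nsmul p (nsmul m' g)"
      by (simp only: y_def diff_conv_add_uminus nsmul_plus nsmul_uminus)
    also have "nsmul p (nsmul m' g) = nsmul m g" by (simp only: m' nsmul_mult)
    also have "nsmul p x + - nsmul m g = k" by (simp only: mk) simp
    finally have py: "nsmul p y = k" .
    have ykill: "nsmul (p ^ a) y = 0" using kill yA by blast
    have yn: "y \<notin> CK"
    proof
      assume "y \<in> CK"
      moreover have "nsmul m' g + 0 \<in> CK" using CK_K[of 0 m'] sg_0[OF K(1)] by blast
      ultimately have "y + (nsmul m' g + 0) \<in> CK" by (rule CK_add)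
      then have "y + nsmul m' g \<in> CK" by simp
      then show False using xn by (simp add: y_def x_def)
    qed
    define K' where "K' = {k + nsmul n y | k n. k \<in> K}"
    have negy: "- nsmul n y = nsmul (n * (p ^ a - 1)) y" for n
    proof -
      have "nsmul (n * (p ^ a - 1)) y + nsmul n y = nsmul (n * (p ^ a - 1) + n) y"
        by (simp add: nsmul_add)
      also have "n * (p ^ a - 1) + n = n * p ^ a"
      proof -
        obtain P where "p ^ a = Suc P" using p prime_gt_0_nat
          by (metis gr0_implies_Suc zero_less_power)
        then show ?thesis by simp
      qed
      also have "nsmul (n * p ^ a) y = 0" by (simp add: nsmul_mult ykill)
      finally show ?thesis by (metis neg_eq_iff_add_eq_0 add.commute)
    qed
    have sgK': "sg K'"
      unfolding sg_def
    proof (intro conjI ballI)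
      have "0 + nsmul 0 y \<in> K'" unfolding K'_def using sg_0[OF K(1)] by blast
      then show "0 \<in> K'" by simp
    next
      fix u v assume "u \<in> K'" "v \<in> K'"
      then obtain k1 n1 k2 n2 where "u = k1 + nsmul n1 y" "k1 \<in> K" "v = k2 + nsmul n2 y" "k2 \<in> K"
        by (auto simp: K'_def)
      then have "u + v = (k1 + k2) + nsmul (n1 + n2) y \<and> k1 + k2 \<in> K"
        using K(1) by (simp add: nsmul_add sg_add algebra_simps)
      then show "u + v \<in> K'" unfolding K'_def by blast
    next
      fix u assume "u \<in> K'"
      then obtain k1 n1 where "u = k1 + nsmul n1 y" "k1 \<in> K" by (auto simp: K'_def)
      then have "- u = (- k1) + nsmul (n1 * (p ^ a - 1)) y \<and> - k1 \<in> K"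
        using K(1) negy[of n1] by (simp add: sg_neg)
      then show "- u \<in> K'" unfolding K'_def by blast
    qed
    have K'A: "K' \<subseteq> A" unfolding K'_def using K(2) A yA by (auto intro: sg_add sg_nsmul)
    have K'C: "nsmul c g = 0" if c: "nsmul c g \<in> K'" for c
    proof -
      obtain k1 n where kn: "nsmul c g = k1 + nsmul n y" "k1 \<in> K" using c by (auto simp: K'_def)
      define r where "r = n mod p"
      define q where "q = n div p"
      have "nsmul n y = nsmul (q * p + r) y" by (simp add: q_def r_def)
      also have "\<dots> = nsmul q k + nsmul r y" by (simp add: nsmul_add nsmul_mult py)
      finally have eq: "nsmul c g = (k1 + nsmul q k) + nsmul r y" using kn by (simp add: add.assoc)
      have k2: "k1 + nsmul q k \<in> K" using K(1) kn(2) mk(2) by (simp add: sg_add sg_nsmul)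
      show ?thesis
      proof (cases "r = 0")
        case True
        then have "nsmul c g \<in> K" using eq k2 by simp
        then show ?thesis using K(3) by blast
      next
        case False
        have "r < p" using p prime_gt_0_nat by (simp add: r_def)
        then have "coprime r p" using False p
          by (metis coprime_commute prime_imp_coprime nat_dvd_not_less neq0_conv)
        then have "coprime r (p ^ a)" by simp
        then obtain c' k' where "k' \<in> K" "y = nsmul c' g + k'"
          using coprime_absorb[OF K(1) k2 ykill _ eq] by blast
        then have "y \<in> CK" by (simp add: CK_K)
        then show ?thesis using yn by blast
      qed
    qed
    have "P K'" using sgK' K'A K'C by (auto simp: P_def)
    moreover have "K \<subset> K'"
    proof
      show "K \<subseteq> K'"
      proof
        fix u assume "u \<in> K"
        then have "u + nsmul 0 y \<in> K'" unfolding K'_def by blast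
        then show "u \<in> K'" by simp
      qed
      have "0 + nsmul 1 y \<in> K'" unfolding K'_def using sg_0[OF K(1)] by blast
      then have "y \<in> K'" by simp
      moreover have "y \<notin> K"
      proof
        assume "y \<in> K"
        then have "nsmul 0 g + y \<in> CK" by (rule CK_K)
        then show False using yn by simp
      qed
      ultimately show "K \<noteq> K'" by blast
    qed
    then have "card K < card K'" by (simp add: psubset_card_mono)
    ultimately show False using Kmax by fastforce
  qed
  then have "\<forall>x\<in>A. \<exists>c k. k \<in> K \<and> x = nsmul c g + k" unfolding CK_def by blast
  then show ?thesis using K by blast
qed

lemma mset_split:
  assumes "T \<subseteq># replicate_mset m e + R"
  shows "\<exists>c T''. c \<le> m \<and> T'' \<subseteq># R \<and> T = replicate_mset c e + T''"
proof -
  define c where "c = min (count T e) m"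
  have sub: "replicate_mset c e \<subseteq># T" by (simp add: c_def subseteq_mset_def)
  define T'' where "T'' = T - replicate_mset c e"
  have T: "T = replicate_mset c e + T''" using sub by (simp add: T''_def)
  have "T'' \<subseteq># R"
    unfolding subseteq_mset_def
  proof
    fix x
    have "count T x \<le> count (replicate_mset m e) x + count R x"
      using assms by (simp add: subseteq_mset_def del: count_replicate_mset)
    then show "count T'' x \<le> count R x"
      by (auto simp: T''_def c_def)
  qed
  moreover have "c \<le> m" by (simp add: c_def)
  ultimately show ?thesis using T by blast
qed

lemma set_Zm: "set_mset (Zm p es) \<subseteq> set (map fst es)"
  by (induct es) auto

lemma zero_sumfree_empty: "zero_sumfree {#}"
  by (simp add: zero_sumfree_def)

lemma basis:
  fixes A :: "'g::{ab_group_add,finite} set"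
  assumes p: "prime p" and kill: "\<forall>x::'g. nsmul (p ^ N) x = 0"
  shows "sg A \<Longrightarrow> \<exists>es. (\<forall>ea\<in>set es. fst ea \<in> A \<and> nsmul (p ^ snd ea) (fst ea) = 0)
            \<and> A \<subseteq> spanL (map fst es) \<and> zero_sumfree (Zm p es)"
proof (induct "card A" arbitrary: A rule: less_induct)
  case less
  show ?case
  proof (cases "A \<subseteq> {0}")
    case True
    then show ?thesis by (intro exI[of _ "[]"]) (simp add: zero_sumfree_empty)
  next
    case False
    then obtain x1 where x1: "x1 \<in> A" "x1 \<noteq> 0" by blast
    define a where "a = (LEAST a. \<forall>x\<in>A. nsmul (p ^ a) x = 0)"
    have ka: "\<forall>x\<in>A. nsmul (p ^ a) x = 0"
      unfolding a_def by (rule LeastI[of _ N]) (simp add: kill)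
    have a0: "a \<noteq> 0"
    proof
      assume "a = 0"
      then have "nsmul (p ^ a) x1 = x1" by simp
      then show False using ka x1 by simp
    qed
    have "\<not> (\<forall>x\<in>A. nsmul (p ^ (a - 1)) x = 0)"
      using not_less_Least[of "a - 1" "\<lambda>a. \<forall>x\<in>A. nsmul (p ^ a) x = 0"] a0
      unfolding a_def by fastforce
    then obtain g where gA: "g \<in> A" and nz: "nsmul (p ^ (a - 1)) g \<noteq> 0" by blast
    have a1: "a \<ge> 1" using a0 by simp
    obtain K where K: "sg K" "K \<subseteq> A" "\<forall>c. nsmul c g \<in> K \<longrightarrow> nsmul c g = 0"
      "\<forall>x\<in>A. \<exists>c k. k \<in> K \<and> x = nsmul c g + k"
      using complement[OF p less.prems gA ka a1 nz] by blast
    have gK: "g \<notin> K"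
    proof
      assume "g \<in> K"
      then have "nsmul 1 g \<in> K" by simp
      then have "g = 0" using K(3) by fastforce
      then show False using nz by simp
    qed
    have "card K < card A" using K(2) gA gK by (intro psubset_card_mono) auto
    then obtain es' where es': "\<forall>ea\<in>set es'. fst ea \<in> K \<and> nsmul (p ^ snd ea) (fst ea) = 0"
      "K \<subseteq> spanL (map fst es')" "zero_sumfree (Zm p es')"
      using less.hyps K(1) by blast
    have gk: "nsmul (p ^ a) g = 0" using ka gA by blast
    define es where "es = (g, a) # es'"
    have c1: "\<forall>ea\<in>set es. fst ea \<in> A \<and> nsmul (p ^ snd ea) (fst ea) = 0"
      using es' K(2) gA gk by (auto simp: es_def)
    have c2: "A \<subseteq> spanL (map fst es)"
    proof
      fix x assume "x \<in> A"
      then obtain c k where "k \<in> K" "x = nsmul c g + k" using K(4) by blast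
      then show "x \<in> spanL (map fst es)" using es'(2) by (auto simp: es_def)
    qed
    have c3: "zero_sumfree (Zm p es)"
      unfolding zero_sumfree_def
    proof (intro allI impI notI)
      fix S' assume S': "S' \<subseteq># Zm p es \<and> S' \<noteq> {#}" and s0: "sum_mset S' = 0"
      have S'': "S' \<subseteq># replicate_mset (p ^ a - 1) g + Zm p es'" using S' by (simp add: es_def)
      obtain c T'' where cT: "c \<le> p ^ a - 1" "T'' \<subseteq># Zm p es'" "S' = replicate_mset c g + T''"
        using mset_split[OF S''] by blast
      have "set_mset T'' \<subseteq> set_mset (Zm p es')" by (rule set_mset_mono[OF cT(2)])
      also have "\<dots> \<subseteq> set (map fst es')" by (rule set_Zm)
      also have "\<dots> \<subseteq> K" using es'(1) by auto
      finally have "set_mset T'' \<subseteq> K" .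
      then have TK: "sum_mset T'' \<in> K" using sg_sum_mset[OF K(1)] by blast
      have "nsmul c g + sum_mset T'' = 0" using s0 cT(3) by (simp add: sum_mset_replicate)
      then have "nsmul c g = - sum_mset T''" by (simp add: eq_neg_iff_add_eq_0)
      then have "nsmul c g \<in> K" using TK K(1) by (simp add: sg_neg)
      then have "nsmul c g = 0" using K(3) by blast
      then have "p ^ a dvd c" using order_pow[OF p gk nz] by blast
      moreover have "c < p ^ a" using cT(1) p prime_gt_0_nat
        by (metis diff_less le_less_trans zero_less_one zero_less_power)
      ultimately have "c = 0" using nat_dvd_not_less by blast
      then have "T'' \<noteq> {#}" "sum_mset T'' = 0" using cT(3) S' s0 by auto
      then show False using es'(3) cT(2) unfolding zero_sumfree_def by blast
    qed
    show ?thesis using c1 c2 c3 by blast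
  qed
qed

lemma sum_Pow_insert:
  assumes "finite V" "x \<notin> V"
  shows "sum f (Pow (insert x V)) = sum f (Pow V) + sum (\<lambda>W. f (insert x W)) (Pow V)"
proof -
  have inj: "inj_on (insert x) (Pow V)"
    using assms(2) unfolding inj_on_def by (metis PowD insert_ident subsetD)
  have disj: "Pow V \<inter> insert x ` Pow V = {}" using assms(2) by auto
  have "sum f (Pow (insert x V)) = sum f (Pow V \<union> insert x ` Pow V)" by (simp add: Pow_insert)
  also have "\<dots> = sum f (Pow V) + sum f (insert x ` Pow V)"
    using assms(1) disj by (intro sum.union_disjoint) auto
  also have "sum f (insert x ` Pow V) = sum (\<lambda>W. f (insert x W)) (Pow V)"
    using sum.reindex[OF inj] by simp
  finally show ?thesis .
qed

lemma card_ins_diff: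
  assumes "finite V0" "x \<notin> V0" "W \<subseteq> V0"
  shows "card (insert x V0 - W) = Suc (card (V0 - W))"
    and "card (insert x V0 - insert x W) = card (V0 - W)"
proof -
  have "insert x V0 - W = insert x (V0 - W)" using assms by auto
  then show "card (insert x V0 - W) = Suc (card (V0 - W))" using assms by simp
  have "insert x V0 - insert x W = V0 - W" using assms by auto
  then show "card (insert x V0 - insert x W) = card (V0 - W)" by simp
qed

lemma alt_a:
  assumes "finite V" "V \<noteq> {}"
  shows "(\<Sum>W\<in>Pow V. (-1::int) ^ card (V - W)) = 0"
proof -
  obtain x where x: "x \<in> V" using assms by blast
  define V0 where "V0 = V - {x}"
  have V: "V = insert x V0" "x \<notin> V0" "finite V0" using x assms by (auto simp: V0_def)
  have "(\<Sum>W\<in>Pow V. (-1::int) ^ card (V - W))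
     = (\<Sum>W\<in>Pow V0. (-1::int) ^ card (insert x V0 - W)) + (\<Sum>W\<in>Pow V0. (-1) ^ card (insert x V0 - insert x W))"
    unfolding V(1) by (rule sum_Pow_insert[OF V(3) V(2)])
  also have "\<dots> = (\<Sum>W\<in>Pow V0. - ((-1::int) ^ card (V0 - W))) + (\<Sum>W\<in>Pow V0. (-1) ^ card (V0 - W))"
    using card_ins_diff[OF V(3) V(2)] by (intro arg_cong2[where f="(+)"] sum.cong) auto
  also have "\<dots> = 0" by (simp add: sum_negf)
  finally show ?thesis .
qed

lemma alt_b:
  assumes "finite V" "card V \<ge> 2"
  shows "(\<Sum>W\<in>Pow V. int (card W) * (-1::int) ^ card (V - W)) = 0"
proof -
  have "V \<noteq> {}" using assms by auto
  then obtain x where x: "x \<in> V" by blast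
  define V0 where "V0 = V - {x}"
  have V: "V = insert x V0" "x \<notin> V0" "finite V0" using x assms by (auto simp: V0_def)
  have "card V0 \<ge> 1" using assms V by simp
  then have V0ne: "V0 \<noteq> {}" by auto
  have cW: "W \<in> Pow V0 \<Longrightarrow> card (insert x W) = Suc (card W)" for W
  proof -
    assume "W \<in> Pow V0"
    then have "finite W" "x \<notin> W" using V finite_subset by auto
    then show ?thesis by simp
  qed
  have "(\<Sum>W\<in>Pow V. int (card W) * (-1::int) ^ card (V - W))
     = (\<Sum>W\<in>Pow V0. int (card W) * (-1::int) ^ card (insert x V0 - W))
       + (\<Sum>W\<in>Pow V0. int (card (insert x W)) * (-1) ^ card (insert x V0 - insert x W))"
    unfolding V(1) by (rule sum_Pow_insert[OF V(3) V(2)])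
  also have "\<dots> = (\<Sum>W\<in>Pow V0. - (int (card W) * (-1::int) ^ card (V0 - W)))
       + (\<Sum>W\<in>Pow V0. (int (card W) * (-1) ^ card (V0 - W) + (-1) ^ card (V0 - W)))"
    using card_ins_diff[OF V(3) V(2)] cW by (intro arg_cong2[where f="(+)"] sum.cong) (auto simp: algebra_simps)
  also have "\<dots> = (\<Sum>W\<in>Pow V0. (-1::int) ^ card (V0 - W))"
    by (simp add: sum_negf sum.distrib)
  also have "\<dots> = 0" by (rule alt_a[OF V(3) V0ne])
  finally show ?thesis .
qed

lemma alt_k:
  assumes "finite V" "card V \<ge> 2" "card V \<le> k"
  shows "(\<Sum>W\<in>Pow V. int (k - card W) * (-1::int) ^ card (V - W)) = 0"
proof -
  have "(\<Sum>W\<in>Pow V. int (k - card W) * (-1::int) ^ card (V - W))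
      = (\<Sum>W\<in>Pow V. int k * (-1::int) ^ card (V - W) - int (card W) * (-1::int) ^ card (V - W))"
  proof (rule sum.cong)
    fix W assume "W \<in> Pow V"
    then have "card W \<le> card V" using assms(1) by (simp add: card_mono)
    then have "card W \<le> k" using assms(3) by linarith
    then show "int (k - card W) * (-1::int) ^ card (V - W) = int k * (-1::int) ^ card (V - W) - int (card W) * (-1::int) ^ card (V - W)"
      by (simp add: of_nat_diff algebra_simps)
  qed simp
  also have "\<dots> = int k * (\<Sum>W\<in>Pow V. (-1::int) ^ card (V - W)) - (\<Sum>W\<in>Pow V. int (card W) * (-1::int) ^ card (V - W))"
    by (simp add: sum_subtractf sum_distrib_left)
  also have "\<dots> = 0" using alt_a[OF assms(1)] alt_b[OF assms(1,2)] assms(2) by fastforce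
  finally show ?thesis .
qed

lemma reindex_pairs:
  fixes F :: "'a set \<Rightarrow> 'a set \<Rightarrow> int"
  assumes U: "finite U"
  shows "(\<Sum>W\<in>Pow U. \<Sum>I\<in>Pow (U - W). F W I) = (\<Sum>V\<in>Pow U. \<Sum>W\<in>Pow V. F W (V - W))"
proof -
  have "(\<Sum>W\<in>Pow U. \<Sum>I\<in>Pow (U - W). F W I) = (\<Sum>W\<in>Pow U. \<Sum>V\<in>{V. V \<in> Pow U \<and> W \<subseteq> V}. F W (V - W))"
  proof (rule sum.cong[OF refl])
    fix W assume W: "W \<in> Pow U"
    show "(\<Sum>I\<in>Pow (U - W). F W I) = (\<Sum>V\<in>{V. V \<in> Pow U \<and> W \<subseteq> V}. F W (V - W))"
      by (rule sum.reindex_bij_witness[where i="\<lambda>V. V - W" and j="\<lambda>I. W \<union> I"]) (use W in \<open>auto intro!: arg_cong[where f="F W"]\<close>)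
  qed
  also have "\<dots> = (\<Sum>V\<in>Pow U. \<Sum>W\<in>{W. W \<in> Pow U \<and> W \<subseteq> V}. F W (V - W))"
    by (rule sum.swap_restrict) (use U in auto)
  also have "\<dots> = (\<Sum>V\<in>Pow U. \<Sum>W\<in>Pow V. F W (V - W))"
    by (rule sum.cong[OF refl], rule sum.cong) auto
  finally show ?thesis .
qed

lemma key_contra:
  fixes t :: "nat \<Rightarrow> 'g::ab_group_add" and es :: "('g \<times> nat) list"
  assumes p: "prime p" and es: "\<forall>ea\<in>set es. nsmul (p ^ snd ea) (fst ea) = 0"
    and span: "\<forall>j<n. t j \<in> spanL (map fst es)"
    and n: "n = size (Zm p es) + k" and k1: "1 \<le> k" and kp: "k < p"
    and nz: "\<forall>j<n. t j \<noteq> 0"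
    and small: "\<forall>I. I \<subseteq> {..<n} \<longrightarrow> sum t I = 0 \<longrightarrow> card I \<le> k"
  shows False
proof -
  define U where "U = {..<n}"
  have U: "finite U" by (simp add: U_def)
  define g where "g W = (\<Sum>I\<in>Pow (U - W). ((-1::int) ^ card I when sum t W + sum t I = 0))" for W
  have gd: "int p dvd g W" if W: "W \<in> Pow U" "card W < k" for W
  proof -
    have "card (U - W) = n - card W" using W U by (simp add: card_Diff_subset finite_subset U_def)
    then have "card (U - W) > size (Zm p es)" using n W(2) by linarith
    moreover have "\<forall>j\<in>U - W. t j \<in> spanL (map fst es)" using span by (auto simp: U_def)
    ultimately show ?thesis unfolding g_def
      using olson_count[OF p es, of "U - W" t "sum t W"] U by auto
  qed
  have d1: "int p dvd (\<Sum>W\<in>Pow U. int (k - card W) * g W)"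
  proof (rule dvd_sum)
    fix W assume W: "W \<in> Pow U"
    show "int p dvd int (k - card W) * g W"
    proof (cases "card W < k")
      case True then show ?thesis using gd[OF W] by simp
    next
      case False then show ?thesis by simp
    qed
  qed
  have "(\<Sum>W\<in>Pow U. int (k - card W) * g W)
      = (\<Sum>W\<in>Pow U. \<Sum>I\<in>Pow (U - W). int (k - card W) * ((-1::int) ^ card I when sum t W + sum t I = 0))"
    by (simp add: g_def sum_distrib_left)
  also have "\<dots> = (\<Sum>V\<in>Pow U. \<Sum>W\<in>Pow V. int (k - card W) * ((-1::int) ^ card (V - W) when sum t W + sum t (V - W) = 0))"
    by (rule reindex_pairs[OF U])
  also have "\<dots> = (\<Sum>V\<in>Pow U. (if V = {} then int k else 0))"
  proof (rule sum.cong[OF refl])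
    fix V assume V: "V \<in> Pow U"
    then have fV: "finite V" using U finite_subset by auto
    have "(\<Sum>W\<in>Pow V. int (k - card W) * ((-1::int) ^ card (V - W) when sum t W + sum t (V - W) = 0))
        = (\<Sum>W\<in>Pow V. int (k - card W) * ((-1::int) ^ card (V - W) when sum t V = 0))"
    proof (rule sum.cong[OF refl])
      fix W assume "W \<in> Pow V"
      then have "sum t V = sum t (V - W) + sum t W" using fV by (simp add: sum.subset_diff)
      then show "int (k - card W) * ((-1::int) ^ card (V - W) when sum t W + sum t (V - W) = 0)
          = int (k - card W) * ((-1::int) ^ card (V - W) when sum t V = 0)"
        by (simp add: add.commute)
    qed
    also have "\<dots> = (if V = {} then int k else 0)"
    proof (cases "sum t V = 0")
      case False
      then have "V \<noteq> {}" by auto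
      then show ?thesis using False by simp
    next
      case True
      show ?thesis
      proof (cases "V = {}")
        case True then show ?thesis by simp
      next
        case False
        have "card V \<noteq> 1"
        proof
          assume "card V = 1"
          then obtain j where "V = {j}" by (auto simp: card_Suc_eq)
          then show False using True nz V by (auto simp: U_def)
        qed
        moreover have "card V \<noteq> 0" using False fV by simp
        ultimately have c2: "card V \<ge> 2" by linarith
        have ck: "card V \<le> k" using small V True by (auto simp: U_def)
        show ?thesis using alt_k[OF fV c2 ck] True False by simp
      qed
    qed
    finally show "(\<Sum>W\<in>Pow V. int (k - card W) * ((-1::int) ^ card (V - W) when sum t W + sum t (V - W) = 0))
        = (if V = {} then int k else 0)" .
  qed
  also have "\<dots> = int k" using U by (simp add: sum.delta')
  finally have "int p dvd int k" using d1 by simp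
  then have "p dvd k" by simp
  then show False using k1 kp nat_dvd_not_less by auto
qed

lemma mset_idx: "mset xs = image_mset (nth xs) (mset_set {..<length xs})"
proof -
  have "mset xs = mset (map (nth xs) [0..<length xs])" by (simp add: map_nth)
  also have "\<dots> = image_mset (nth xs) (mset_set {..<length xs})"
    by (simp add: atLeast0LessThan)
  finally show ?thesis .
qed

lemma idx_sub:
  assumes "I \<subseteq> {..<length xs}"
  shows "image_mset (nth xs) (mset_set I) \<subseteq># mset xs"
proof -
  have "mset_set I \<subseteq># mset_set {..<length xs}"
    using assms by (intro subset_imp_msubset_mset_set) auto
  then show ?thesis unfolding mset_idx[of xs] by (rule image_mset_subseteq_mono)
qed

lemma idx_sum: "sum_mset (image_mset f (mset_set I)) = sum f I"
  by (simp add: sum_unfold_sum_mset)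

lemma pow_sum_single:
  fixes t :: "'j \<Rightarrow> 'g::comm_monoid_add"
  assumes "finite J" "\<forall>I\<in>Pow J. I \<noteq> {} \<longrightarrow> sum t I \<noteq> 0"
  shows "(\<Sum>I\<in>Pow J. ((-1::int) ^ card I when 0 + sum t I = 0)) = 1"
proof -
  have "(\<Sum>I\<in>Pow J. ((-1::int) ^ card I when 0 + sum t I = 0)) = (\<Sum>I\<in>Pow J. (if I = {} then 1 else 0))"
    using assms(2) by (intro sum.cong) (auto simp: when_def)
  also have "\<dots> = 1" using assms(1) by (simp add: sum.delta')
  finally show ?thesis .
qed

lemma dav_eq:
  fixes es :: "('g::{ab_group_add,finite} \<times> nat) list"
  assumes p: "prime p" and es: "\<forall>ea\<in>set es. nsmul (p ^ snd ea) (fst ea) = 0"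
    and span: "(UNIV::'g set) \<subseteq> spanL (map fst es)" and zf: "zero_sumfree (Zm p es)"
  shows "davenport TYPE('g) = size (Zm p es) + 1"
  unfolding davenport_def
proof (rule Least_equality)
  show "0 < size (Zm p es) + 1 \<and> (\<forall>S::'g multiset. size (Zm p es) + 1 \<le> size S \<longrightarrow>
          (\<exists>S'. S' \<subseteq># S \<and> S' \<noteq> {#} \<and> sum_mset S' = 0))"
  proof (intro conjI allI impI)
    fix S :: "'g multiset" assume sz: "size (Zm p es) + 1 \<le> size S"
    obtain xs where xs: "mset xs = S" using ex_mset by blast
    define J where "J = {..<length xs}"
    show "\<exists>S'. S' \<subseteq># S \<and> S' \<noteq> {#} \<and> sum_mset S' = 0"
    proof (rule ccontr)
      assume no: "\<not> (\<exists>S'. S' \<subseteq># S \<and> S' \<noteq> {#} \<and> sum_mset S' = 0)"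
      have ne: "\<forall>I\<in>Pow J. I \<noteq> {} \<longrightarrow> sum (nth xs) I \<noteq> 0"
      proof (intro ballI impI notI)
        fix I assume I: "I \<in> Pow J" "I \<noteq> {}" "sum (nth xs) I = 0"
        have fI: "finite I" using I(1) by (auto simp: J_def finite_subset)
        have "image_mset (nth xs) (mset_set I) \<subseteq># S" using idx_sub[of I xs] I(1) xs by (auto simp: J_def)
        moreover have "image_mset (nth xs) (mset_set I) \<noteq> {#}" using I(2) fI by (simp add: mset_set_empty_iff)
        moreover have "sum_mset (image_mset (nth xs) (mset_set I)) = 0" using I(3) by (simp add: idx_sum)
        ultimately show False using no by blast
      qed
      have "length xs = size S" using xs by (metis size_mset)
      then have "card J > size (Zm p es)" using sz by (simp add: J_def)
      moreover have "\<forall>j\<in>J. nth xs j \<in> spanL (map fst es)" using span by auto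
      ultimately have "int p dvd (\<Sum>I\<in>Pow J. ((-1::int) ^ card I when 0 + sum (nth xs) I = 0))"
        using olson_count[OF p es, of J "nth xs" 0] by (simp add: J_def)
      then have "int p dvd 1" using pow_sum_single[OF _ ne] by (simp add: J_def)
      then show False using p by simp
    qed
  qed simp
next
  fix y assume y: "0 < y \<and> (\<forall>S::'g multiset. y \<le> size S \<longrightarrow> (\<exists>S'. S' \<subseteq># S \<and> S' \<noteq> {#} \<and> sum_mset S' = 0))"
  show "size (Zm p es) + 1 \<le> y"
  proof (rule ccontr)
    assume "\<not> size (Zm p es) + 1 \<le> y"
    then have "y \<le> size (Zm p es)" by simp
    then obtain S' where "S' \<subseteq># Zm p es" "S' \<noteq> {#}" "sum_mset S' = 0" using y by blast
    then show False using zf unfolding zero_sumfree_def by blast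
  qed
qed

lemma card_kill: "nsmul (CARD('g)) (x::'g::{ab_group_add,finite}) = 0"
proof -
  have "(\<Sum>y\<in>UNIV. x + y) = (\<Sum>y\<in>(UNIV::'g set). y)"
    by (rule sum.reindex_bij_witness[where i="\<lambda>y. y - x" and j="\<lambda>y. x + y"]) auto
  moreover have "(\<Sum>y\<in>UNIV. x + y) = nsmul (CARD('g)) x + (\<Sum>y\<in>(UNIV::'g set). y)"
    by (simp add: sum.distrib sum_const_nsmul)
  ultimately show ?thesis by simp
qed

theorem corollary2p2:
  fixes p :: nat and i :: nat
    and \<phi> :: "'g::{ab_group_add,finite} \<Rightarrow> 'c::{ab_group_add,finite} \<times> 'h::{ab_group_add,finite}"
    and S :: "'g multiset"
  assumes "prime p"
    and "cyclic_group_type TYPE('c)" and "CARD('c) = p"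
    and "\<exists>k. CARD('h) = p ^ k"
    and "group_iso \<phi>"
    and "normal_seq S"
    and "size S = davenport TYPE('g) + i - 1"
    and "1 \<le> i" and "i \<le> p - 1"
  shows "\<exists>T. S = replicate_mset i 0 + T \<and> zero_sumfree T"
proof -
  note p = assms(1)
  obtain k0 where k0: "CARD('h) = p ^ k0" using assms(4) by blast
  have "bij \<phi>" using assms(5) by (simp add: group_iso_def)
  then have "CARD('g) = card (UNIV :: ('c \<times> 'h) set)" by (rule bij_betw_same_card)
  also have "\<dots> = CARD('c) * CARD('h)" by (simp add: card_cartesian_product flip: UNIV_Times_UNIV)
  finally have cg: "CARD('g) = p ^ Suc k0" using assms(3) k0 by simp
  have kill: "\<forall>x::'g. nsmul (p ^ Suc k0) x = 0" using card_kill cg by metis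
  have "sg (UNIV::'g set)" by (simp add: sg_def)
  then obtain es :: "('g \<times> nat) list" where
    es: "\<forall>ea\<in>set es. fst ea \<in> UNIV \<and> nsmul (p ^ snd ea) (fst ea) = 0"
    and span: "(UNIV::'g set) \<subseteq> spanL (map fst es)" and zf: "zero_sumfree (Zm p es)"
    using basis[OF p kill] by blast
  have es': "\<forall>ea\<in>set es. nsmul (p ^ snd ea) (fst ea) = 0" using es by blast
  define D where "D = davenport TYPE('g)"
  have D: "D = size (Zm p es) + 1" unfolding D_def by (rule dav_eq[OF p es' span zf])
  have norm: "\<And>S'. S' \<subseteq># S \<Longrightarrow> sum_mset S' = 0 \<Longrightarrow> size S' \<le> i"
  proof -
    fix S' assume "S' \<subseteq># S" "sum_mset S' = 0"
    then have "size S' \<le> size S - D + 1"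
      using assms(6) unfolding normal_seq_def zero_sum_seq_def D_def by blast
    then show "size S' \<le> i" using assms(7,8) by (simp add: D_def)
  qed
  define z where "z = count S 0"
  define Z0 where "Z0 = replicate_mset z (0::'g)"
  have Z0S: "Z0 \<subseteq># S" by (simp add: Z0_def z_def subseteq_mset_def)
  have sZ0: "sum_mset Z0 = 0" by (simp add: Z0_def sum_mset_replicate)
  have zi: "z \<le> i" using norm[OF Z0S sZ0] by (simp add: Z0_def)
  define T0 where "T0 = S - Z0"
  have ST0: "S = Z0 + T0" using Z0S by (simp add: T0_def)
  have cT0: "count T0 0 = 0" by (simp add: T0_def Z0_def z_def)
  have zi2: "z = i"
  proof (rule ccontr)
    assume "z \<noteq> i"
    then have zl: "z < i" using zi by simp
    define k where "k = i - z"
    obtain xs where xs: "mset xs = T0" using ex_mset by blast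
    define n where "n = length xs"
    have "size S = size Z0 + size T0" using ST0 by simp
    then have "size T0 = D + i - 1 - z" using assms(7) by (simp add: Z0_def D_def)
    then have n: "n = size (Zm p es) + k" using D zl xs by (simp add: n_def k_def flip: size_mset)
    show False
    proof (rule key_contra[OF p es' _ n])
      show "\<forall>j<n. xs ! j \<in> spanL (map fst es)" using span by auto
      show "1 \<le> k" using zl by (simp add: k_def)
      show "k < p" using zl assms(9) p prime_gt_0_nat by (simp add: k_def)
      show "\<forall>j<n. xs ! j \<noteq> 0"
      proof (intro allI impI notI)
        fix j assume "j < n" "xs ! j = 0"
        then have "0 \<in> set xs" by (metis n_def nth_mem)
        then have "0 \<in># T0" using xs by (metis set_mset_mset)
        then show False using cT0 by (simp add: count_eq_zero_iff)
      qed
      show "\<forall>I. I \<subseteq> {..<n} \<longrightarrow> sum (nth xs) I = 0 \<longrightarrow> card I \<le> k"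
      proof (intro allI impI)
        fix I assume I: "I \<subseteq> {..<n}" "sum (nth xs) I = 0"
        define T' where "T' = image_mset (nth xs) (mset_set I)"
        have "T' \<subseteq># T0" using idx_sub[of I xs] I xs by (simp add: T'_def n_def)
        then have "Z0 + T' \<subseteq># S" using ST0 by simp
        moreover have "sum_mset (Z0 + T') = 0" using sZ0 I(2) by (simp add: T'_def idx_sum)
        ultimately have "size (Z0 + T') \<le> i" by (rule norm)
        moreover have "size T' = card I" by (simp add: T'_def)
        ultimately show "card I \<le> k" by (simp add: Z0_def k_def)
      qed
    qed
  qed
  have "S = replicate_mset i 0 + T0" using ST0 zi2 by (simp add: Z0_def)
  moreover have "zero_sumfree T0"
    unfolding zero_sumfree_def
  proof (intro allI impI notI)
    fix S' assume S': "S' \<subseteq># T0 \<and> S' \<noteq> {#}" and s0: "sum_mset S' = 0"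
    then have "Z0 + S' \<subseteq># S" using ST0 by simp
    moreover have "sum_mset (Z0 + S') = 0" using sZ0 s0 by simp
    ultimately have "size (Z0 + S') \<le> i" by (rule norm)
    moreover have "size S' > 0" using S' by (simp add: nonempty_has_size)
    ultimately show False using zi2 by (simp add: Z0_def)
  qed
  ultimately show ?thesis by (intro exI[of _ T0] conjI)
qed

end
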